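(* Let $\mathcal{O}$ be a nonempty set of quantum channels on $n$ qubits and $\Psi$ a channel on $n$ qubits with $\gamma(\Psi)<\infty$. Then for every sample $S=(z_1,\ldots,z_m)$ with $z_i\in\mathbb{F}_2^n\times\mathbb{F}_2^n$, \[ \hat{G}_S(\mathcal{F}(\mathcal{O}))\le\hat{G}_S(\mathcal{F}(\mathcal{O}\cup\{\Psi\}))\le(1+\gamma(\Psi))\,\hat{G}_S(\mathcal{F}(\mathcal{O})), \] and for every distribution $D$ on $\mathbb{F}_2^n\times\mathbb{F}_2^n$, $G_D(\mathcal{F}(\mathcal{O}))\le G_D(\mathcal{F}(\mathcal{O}\cup\{\Psi\}))\le(1+\gamma(\Psi))G_D(\mathcal{F}(\mathcal{O}))$.
   Context: A quantum channel on $n$ qubits is a completely positive trace-preserving linear map on $2^n\times2^n$ complex matrices. For a channel $\Phi$, $f_\Phi(x,y)=\mathrm{Tr}[\Phi(|x\rangle\langle x|)\,|y\rangle\langle y|]$; $\mathcal{F}(\Omega)=\{f_\Phi:\Phi\in\Omega\}$. Empirical Gaussian complexity: $\hat{G}_S(\mathcal{G})=\mathbb{E}_{g}[\sup_{h\in\mathcal{G}}\frac1m\sum_{i=1}^m g_i h(z_i)]$ with $g_1,\ldots,g_m$ i.i.d. $\mathcal{N}(0,1)$; $G_D(\mathcal{G})=\mathbb{E}_{S\sim D^m}\hat{G}_S(\mathcal{G})$. Free robustness w.r.t. $\mathcal{O}$: $\gamma(\Psi)=\inf\{\lambda\ge0:\exists\,\Phi\in\mathrm{Conv}(\mathcal{O}),\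 (\Psi+\lambda\Phi)/(1+\lambda)\in\mathrm{Conv}(\mathcal{O})\}$. *)

theory Defs
  imports "HOL-Probability.Probability"
begin

text \<open>Matrices of size d are encoded as functions nat => nat => complex; only the
entries with both indices < d are meaningful. A superoperator on n qubits is a map
on such matrices, considered on the block of size 2^n.\<close>

type_synonym cmat = "nat \<Rightarrow> nat \<Rightarrow> complex"
type_synonym superop = "cmat \<Rightarrow> cmat"

definition psd :: "nat \<Rightarrow> cmat \<Rightarrow> bool" where
  "psd d M \<longleftrightarrow> (\<forall>v :: nat \<Rightarrow> complex.
      (\<Sum>i<d. \<Sum>j<d. cnj (v i) * M i j * v j) \<in> \<real> \<and>
      0 \<le> Re (\<Sum>i<d. \<Sum>j<d. cnj (v i) * M i j * v j))"

text \<open>(id_k tensor Phi) applied to a (k*N)x(k*N) matrix, viewed as a k x k block matrix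
with N x N blocks.\<close>
definition id_tensor :: "nat \<Rightarrow> nat \<Rightarrow> superop \<Rightarrow> superop" where
  "id_tensor N k \<Phi> X = (\<lambda>r c. \<Phi> (\<lambda>i j. X ((r div N) * N + i) ((c div N) * N + j))
                                (r mod N) (c mod N))"

definition is_channel :: "nat \<Rightarrow> superop \<Rightarrow> bool" where
  "is_channel n \<Phi> \<longleftrightarrow>
     (let N = 2 ^ n in
       \<comment> \<open>it is a map on N x N matrices: output block depends only on input block\<close>
       (\<forall>X Y. (\<forall>i<N. \<forall>j<N. X i j = Y i j) \<longrightarrow> (\<forall>i<N. \<forall>j<N. \<Phi> X i j = \<Phi> Y i j)) \<and>
       \<comment> \<open>linearity\<close>
       (\<forall>X Y (a::complex). \<forall>i<N. \<forall>j<N.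
           \<Phi> (\<lambda>p q. a * X p q + Y p q) i j = a * \<Phi> X i j + \<Phi> Y i j) \<and>
       \<comment> \<open>complete positivity\<close>
       (\<forall>k X. psd (k * N) X \<longrightarrow> psd (k * N) (id_tensor N k \<Phi> X)) \<and>
       \<comment> \<open>trace preservation\<close>
       (\<forall>X. (\<Sum>i<N. \<Phi> X i i) = (\<Sum>i<N. X i i)))"

text \<open>Convex hull of a set of channels (equality of maps on N x N matrices).\<close>
definition conv_ch :: "nat \<Rightarrow> superop set \<Rightarrow> superop set" where
  "conv_ch n Ocal = {\<Phi>. \<exists>(k::nat) (p::nat \<Rightarrow> real) \<Phi>s.
      (\<forall>l<k. \<Phi>s l \<in> Ocal \<and> 0 \<le> p l) \<and> (\<Sum>l<k. p l) = 1 \<and>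
      (\<forall>X. \<forall>i<2^n. \<forall>j<2^n. \<Phi> X i j = (\<Sum>l<k. complex_of_real (p l) * \<Phi>s l X i j))}"

text \<open>Free robustness (value \<infinity> when the defining set is empty).\<close>
definition free_robustness :: "nat \<Rightarrow> superop set \<Rightarrow> superop \<Rightarrow> ereal" where
  "free_robustness n Ocal \<Psi> = Inf (ereal ` {lam::real. 0 \<le> lam \<and> (\<exists>\<Phi>\<in>conv_ch n Ocal.
       (\<lambda>X i j. (\<Psi> X i j + complex_of_real lam * \<Phi> X i j) / (1 + complex_of_real lam))
         \<in> conv_ch n Ocal)})"

text \<open>Computational basis states |x> of n qubits, x in F_2^n, are encoded by their
index x < 2^n.\<close>
definition ket_proj :: "nat \<Rightarrow> cmat" where
  "ket_proj x = (\<lambda>i j. if i = x \<and> j = x then 1 else 0)"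

text \<open>f_Phi(x,y) = Tr[Phi(|x><x|) |y><y|] = (Phi(|x><x|))_{yy}.\<close>
definition f_ch :: "superop \<Rightarrow> nat \<times> nat \<Rightarrow> real" where
  "f_ch \<Phi> z = Re (\<Phi> (ket_proj (fst z)) (snd z) (snd z))"

definition F_cls :: "superop set \<Rightarrow> (nat \<times> nat \<Rightarrow> real) set" where
  "F_cls Ocal = f_ch ` Ocal"

definition gauss_m :: "nat \<Rightarrow> (nat \<Rightarrow> real) measure" where
  "gauss_m m = PiM {..<m} (\<lambda>_. density lborel std_normal_density)"

definition emp_gauss :: "nat \<Rightarrow> (nat \<Rightarrow> 'z) \<Rightarrow> ('z \<Rightarrow> real) set \<Rightarrow> real" where
  "emp_gauss m z G = (\<integral>g. (SUP h\<in>G. (1 / real m) * (\<Sum>i<m. g i * h (z i))) \<partial>gauss_m m)"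

definition exp_gauss :: "nat \<Rightarrow> 'z pmf \<Rightarrow> ('z \<Rightarrow> real) set \<Rightarrow> real" where
  "exp_gauss m D G = (\<integral>z. emp_gauss m z G \<partial>(PiM {..<m} (\<lambda>_. measure_pmf D)))"

end

theory Submission
  imports Defs
begin

abbreviation "N1 \<equiv> density lborel (\<lambda>x. ennreal (std_normal_density x))"
lemma N1_prob: "prob_space N1"
  using prob_space_normal_density by simp

lemma N1_int_x: "integrable N1 (\<lambda>x. x)"
proof -
  have "integrable lborel (\<lambda>x. std_normal_density x *\<^sub>R x)"
    using integrable_std_normal_moment[of 1] by simp
  then show ?thesis
    by (subst integrable_density) (simp_all add: normal_density_nonneg)
qed

lemma N1_integral_x: "integral\<^sup>L N1 (\<lambda>x. x) = 0"
proof -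
  have "integral\<^sup>L N1 (\<lambda>x. x) = integral\<^sup>L lborel (\<lambda>x. std_normal_density x *\<^sub>R x)"
    by (subst integral_density) (simp_all add: normal_density_nonneg)
  also have "\<dots> = 0" using integral_std_normal_moment_odd[of 0] by simp
  finally show ?thesis .
qed

lemma gauss_prob: "prob_space (gauss_m m)"
  unfolding gauss_m_def
  by (rule prob_space_PiM) (rule N1_prob)

lemma gauss_comp_int:
  assumes "i < m"
  shows "integrable (gauss_m m) (\<lambda>g. g i)" "integral\<^sup>L (gauss_m m) (\<lambda>g. g i) = 0"
proof -
  have d: "distr (gauss_m m) N1 (\<lambda>g. g i) = N1"
    unfolding gauss_m_def using assms N1_prob by (intro distr_PiM_component) auto
  have meas: "(\<lambda>g. g i) \<in> measurable (gauss_m m) N1"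
    unfolding gauss_m_def using assms by (intro measurable_component_singleton) auto
  have bm: "(\<lambda>x::real. x) \<in> borel_measurable N1" by simp
  show "integrable (gauss_m m) (\<lambda>g. g i)"
    using integrable_distr_eq[OF meas bm] d N1_int_x by simp
  show "integral\<^sup>L (gauss_m m) (\<lambda>g. g i) = 0"
    using integral_distr[OF meas bm] d N1_integral_x by simp
qed


definition tm :: "nat \<Rightarrow> (nat \<Rightarrow> 'z) \<Rightarrow> ('z \<Rightarrow> real) \<Rightarrow> (nat \<Rightarrow> real) \<Rightarrow> real" where
  "tm m z h g = (1 / real m) * (\<Sum>i<m. g i * h (z i))"

lemma tm_abs:
  assumes "\<forall>i<m. 0 \<le> h (z i) \<and> h (z i) \<le> 1"
  shows "\<bar>tm m z h g\<bar> \<le> (1 / real m) * (\<Sum>i<m. \<bar>g i\<bar>)"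
proof -
  have "\<bar>\<Sum>i<m. g i * h (z i)\<bar> \<le> (\<Sum>i<m. \<bar>g i * h (z i)\<bar>)" by (rule sum_abs)
  also have "\<dots> \<le> (\<Sum>i<m. \<bar>g i\<bar>)"
  proof (rule sum_mono)
    fix i assume "i \<in> {..<m}"
    then have "0 \<le> h (z i)" "h (z i) \<le> 1" using assms by auto
    then show "\<bar>g i * h (z i)\<bar> \<le> \<bar>g i\<bar>"
      by (simp add: abs_mult mult_left_le)
  qed
  finally show ?thesis unfolding tm_def by (simp add: abs_mult divide_right_mono)
qed

lemma tm_diff:
  "\<bar>tm m z h g - tm m z d g\<bar> \<le> (1 / real m) * (\<Sum>i<m. \<bar>g i\<bar> * \<bar>h (z i) - d (z i)\<bar>)"
proof -
  have "tm m z h g - tm m z d g = (1 / real m) * (\<Sum>i<m. g i * (h (z i) - d (z i)))"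
    unfolding tm_def by (simp add: sum_subtractf right_diff_distrib algebra_simps)
  also have "\<bar>\<dots>\<bar> \<le> (1 / real m) * (\<Sum>i<m. \<bar>g i\<bar> * \<bar>h (z i) - d (z i)\<bar>)"
    using sum_abs[of "\<lambda>i. g i * (h (z i) - d (z i))" "{..<m}"]
    by (simp add: abs_mult divide_right_mono)
  finally show ?thesis .
qed

lemma gauss_comp_meas:
  assumes "i < m"
  shows "(\<lambda>g. g i) \<in> borel_measurable (gauss_m m)"
proof -
  have "(\<lambda>g. g i) \<in> measurable (gauss_m m) N1"
    unfolding gauss_m_def using assms by (intro measurable_component_singleton) auto
  moreover have "sets N1 = sets (borel :: real measure)" by simp
  ultimately show ?thesis using measurable_cong_sets[OF refl, of N1 borel "gauss_m m"] by simp
qed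

lemma tm_meas: "(\<lambda>g. tm m z h g) \<in> borel_measurable (gauss_m m)"
  unfolding tm_def
  by (intro borel_measurable_times borel_measurable_const borel_measurable_sum)
     (auto intro: gauss_comp_meas)

lemma tm_int: "integrable (gauss_m m) (\<lambda>g. tm m z h g)" "integral\<^sup>L (gauss_m m) (\<lambda>g. tm m z h g) = 0"
proof -
  have i: "integrable (gauss_m m) (\<lambda>g. g i * h (z i))" if "i \<in> {..<m}" for i
    using gauss_comp_int(1)[of i m] that by (intro integrable_mult_left) auto
  show "integrable (gauss_m m) (\<lambda>g. tm m z h g)"
    unfolding tm_def using i by (intro integrable_mult_right integrable_sum) auto
  have "integral\<^sup>L (gauss_m m) (\<lambda>g. tm m z h g) = (1 / real m) * (\<Sum>i<m. integral\<^sup>L (gauss_m m) (\<lambda>g. g i * h (z i)))"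
    unfolding tm_def using i by (simp add: integral_sum)
  also have "\<dots> = 0" using gauss_comp_int(2) by simp
  finally show "integral\<^sup>L (gauss_m m) (\<lambda>g. tm m z h g) = 0" .
qed

lemma bdd_tm:
  assumes "\<forall>h\<in>A. \<forall>i<m. 0 \<le> h (z i) \<and> h (z i) \<le> 1"
  shows "bdd_above ((\<lambda>h. tm m z h g) ` A)"
proof (rule bdd_aboveI2[where M="(1 / real m) * (\<Sum>i<m. \<bar>g i\<bar>)"])
  fix h assume "h \<in> A"
  then have "\<bar>tm m z h g\<bar> \<le> (1 / real m) * (\<Sum>i<m. \<bar>g i\<bar>)" using assms by (intro tm_abs) auto
  then show "tm m z h g \<le> (1 / real m) * (\<Sum>i<m. \<bar>g i\<bar>)" by (rule abs_le_D1)
qed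

lemma sup_meas:
  fixes G :: "('z \<Rightarrow> real) set"
  assumes G: "G \<noteq> {}" and bnd: "\<forall>h\<in>G. \<forall>i<m. 0 \<le> h (z i) \<and> h (z i) \<le> 1"
  shows "(\<lambda>g. SUP h\<in>G. tm m z h g) \<in> borel_measurable (gauss_m m)"
proof -
  define vec where "vec h = (\<lambda>i::nat. if i < m then h (z i) else (0::real))" for h :: "'z \<Rightarrow> real"
  obtain B :: "(nat \<Rightarrow> real) set set" where B: "countable B" "topological_basis B"
    using ex_countable_basis by blast
  obtain h0 where h0: "h0 \<in> G" using G by blast
  define B' where "B' = {b\<in>B. \<exists>h\<in>G. vec h \<in> b}"
  define pick where "pick b = (SOME h. h \<in> G \<and> vec h \<in> b)" for b
  define D where "D = insert h0 (pick ` B')"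
  have pick: "pick b \<in> G \<and> vec (pick b) \<in> b" if "b \<in> B'" for b
  proof -
    have "\<exists>h. h \<in> G \<and> vec h \<in> b" using that unfolding B'_def by auto
    then show ?thesis unfolding pick_def by (rule someI_ex)
  qed
  have DG: "D \<subseteq> G" using pick h0 by (auto simp: D_def)
  have DnE: "D \<noteq> {}" by (simp add: D_def)
  have cD: "countable D" using B(1) by (auto simp: D_def B'_def)
  have bdd: "bdd_above ((\<lambda>h. tm m z h g) ` A)" if "A \<subseteq> G" for A g
    using bnd that by (intro bdd_tm) auto
  have approx: "\<exists>d\<in>D. tm m z h g - e < tm m z d g" if h: "h \<in> G" and e: "e > 0" for h g e
  proof -
    define C where "C = (1 / real m) * (\<Sum>i<m. \<bar>g i\<bar>) + 1"
    have C0: "(1 / real m) * (\<Sum>i<m. \<bar>g i\<bar>) \<ge> 0" by (simp add: sum_nonneg)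
    then have C: "C > 0" unfolding C_def by linarith
    define \<delta> where "\<delta> = e / C"
    have \<delta>: "\<delta> > 0" using C e by (simp add: \<delta>_def)
    define U where "U = (\<Inter>i\<in>{..<m}. {w::nat\<Rightarrow>real. \<bar>w i - h (z i)\<bar> < \<delta>})"
    have "open U" unfolding U_def
    proof (intro open_INT ballI)
      fix i
      have c: "continuous_on UNIV (\<lambda>w::nat\<Rightarrow>real. \<bar>w i - h (z i)\<bar>)"
        by (intro continuous_on_rabs continuous_on_diff continuous_on_const continuous_on_product_coordinates)
      show "open {w::nat\<Rightarrow>real. \<bar>w i - h (z i)\<bar> < \<delta>}"
        by (rule open_Collect_less[OF c continuous_on_const])
    qed simp
    have "vec h \<in> U" using \<delta> by (simp add: U_def vec_def)
    then obtain b where b: "b \<in> B" "vec h \<in> b" "b \<subseteq> U"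
      using topological_basisE[OF B(2) \<open>open U\<close>] by metis
    then have bB': "b \<in> B'" using h unfolding B'_def by auto
    define d where "d = pick b"
    have dD: "d \<in> D" using bB' by (simp add: D_def d_def)
    have "vec d \<in> U" using pick[OF bB'] b(3) by (auto simp: d_def)
    then have close: "\<bar>h (z i) - d (z i)\<bar> < \<delta>" if "i < m" for i
      using that by (auto simp: U_def vec_def abs_minus_commute)
    have "\<bar>tm m z h g - tm m z d g\<bar> \<le> (1 / real m) * (\<Sum>i<m. \<bar>g i\<bar> * \<bar>h (z i) - d (z i)\<bar>)"
      by (rule tm_diff)
    also have "\<dots> \<le> (1 / real m) * (\<Sum>i<m. \<bar>g i\<bar> * \<delta>)"
      using close by (intro mult_left_mono sum_mono) (auto intro: mult_left_mono less_imp_le)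
    also have "\<dots> = ((1 / real m) * (\<Sum>i<m. \<bar>g i\<bar>)) * \<delta>"
      by (simp add: sum_distrib_right)
    also have "\<dots> < C * \<delta>" using \<delta> unfolding C_def by (simp add: distrib_right)
    also have "\<dots> = e" using C by (simp add: \<delta>_def)
    finally show ?thesis using dD by (intro bexI[of _ d]) auto
  qed
  have eq: "(SUP h\<in>G. tm m z h g) = (SUP h\<in>D. tm m z h g)" for g
  proof (rule antisym)
    show "(SUP h\<in>G. tm m z h g) \<le> (SUP h\<in>D. tm m z h g)"
    proof (rule cSUP_least[OF G])
      fix h assume h: "h \<in> G"
      show "tm m z h g \<le> (SUP h\<in>D. tm m z h g)"
      proof (rule ccontr)
        assume "\<not> ?thesis"
        then have "0 < tm m z h g - (SUP h\<in>D. tm m z h g)" by simp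
        from approx[OF h this] obtain d where d: "d \<in> D"
          "tm m z h g - (tm m z h g - (SUP h\<in>D. tm m z h g)) < tm m z d g" by blast
        moreover have "tm m z d g \<le> (SUP h\<in>D. tm m z h g)"
          using d(1) bdd[OF DG] by (rule cSUP_upper)
        ultimately show False by simp
      qed
    qed
    show "(SUP h\<in>D. tm m z h g) \<le> (SUP h\<in>G. tm m z h g)"
      by (rule cSUP_subset_mono[OF DnE bdd[OF order_refl] DG]) simp
  qed
  have "(\<lambda>g. SUP h\<in>D. tm m z h g) \<in> borel_measurable (gauss_m m)"
    by (rule borel_measurable_cSUP[OF cD tm_meas bdd[OF DG]])
  then show ?thesis by (simp only: eq)
qed

lemma sup_int:
  fixes G :: "('z \<Rightarrow> real) set"
  assumes G: "G \<noteq> {}" and bnd: "\<forall>h\<in>G. \<forall>i<m. 0 \<le> h (z i) \<and> h (z i) \<le> 1"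
  shows "integrable (gauss_m m) (\<lambda>g. SUP h\<in>G. tm m z h g)"
proof (rule Bochner_Integration.integrable_bound[OF _ sup_meas[OF assms]])
  show "integrable (gauss_m m) (\<lambda>g. (1 / real m) * (\<Sum>i<m. \<bar>g i\<bar>))"
    using gauss_comp_int(1) by (intro integrable_mult_right integrable_sum integrable_abs) auto
  obtain h0 where h0: "h0 \<in> G" using G by blast
  show "AE g in gauss_m m. norm (SUP h\<in>G. tm m z h g) \<le> norm ((1 / real m) * (\<Sum>i<m. \<bar>g i\<bar>))"
  proof (rule AE_I2)
    fix g
    have nn: "(1 / real m) * (\<Sum>i<m. \<bar>g i\<bar>) \<ge> 0" by (simp add: sum_nonneg)
    have up: "(SUP h\<in>G. tm m z h g) \<le> (1 / real m) * (\<Sum>i<m. \<bar>g i\<bar>)"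
    proof (rule cSUP_least[OF G])
      fix h assume "h \<in> G"
      then have "\<bar>tm m z h g\<bar> \<le> (1 / real m) * (\<Sum>i<m. \<bar>g i\<bar>)" using bnd by (intro tm_abs) auto
      then show "tm m z h g \<le> (1 / real m) * (\<Sum>i<m. \<bar>g i\<bar>)" by (rule abs_le_D1)
    qed
    have "tm m z h0 g \<le> (SUP h\<in>G. tm m z h g)"
      using h0 bdd_tm[OF bnd] by (rule cSUP_upper)
    moreover have "- ((1 / real m) * (\<Sum>i<m. \<bar>g i\<bar>)) \<le> tm m z h0 g"
      using tm_abs[of m h0 z g] h0 bnd by auto
    ultimately show "norm (SUP h\<in>G. tm m z h g) \<le> norm ((1 / real m) * (\<Sum>i<m. \<bar>g i\<bar>))"
      using up nn by auto
  qed
qed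



lemma sel_sum:
  fixes M :: cmat
  assumes "y < d"
  shows "(\<Sum>i<d. \<Sum>j<d. cnj (if i = y then 1 else 0) * M i j * (if j = y then 1 else 0)) = M y y"
proof -
  have "(\<Sum>i<d. \<Sum>j<d. cnj (if i = y then 1 else 0) * M i j * (if j = y then 1 else 0))
      = (\<Sum>i<d. if i = y then M y y else 0)"
    by (intro sum.cong refl) (simp add: if_distrib cong: if_cong)
  also have "\<dots> = M y y" using assms by simp
  finally show ?thesis .
qed

lemma ket_sum:
  fixes v :: "nat \<Rightarrow> complex"
  assumes "x < d"
  shows "(\<Sum>i<d. \<Sum>j<d. cnj (v i) * ket_proj x i j * v j) = cnj (v x) * v x"
proof -
  have inner: "(\<Sum>j<d. cnj (v i) * ket_proj x i j * v j) = (if i = x then cnj (v x) * v x else 0)" for i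
  proof (cases "i = x")
    case True
    then have "(\<Sum>j<d. cnj (v i) * ket_proj x i j * v j) = (\<Sum>j<d. if j = x then cnj (v x) * v x else 0)"
      by (intro sum.cong) (auto simp: ket_proj_def)
    also have "\<dots> = cnj (v x) * v x" using assms by simp
    finally show ?thesis using True by simp
  next
    case False
    then show ?thesis by (simp add: ket_proj_def)
  qed
  have "(\<Sum>i<d. \<Sum>j<d. cnj (v i) * ket_proj x i j * v j) = (\<Sum>i<d. if i = x then cnj (v x) * v x else 0)"
    by (simp only: inner)
  also have "\<dots> = cnj (v x) * v x" using assms by simp
  finally show ?thesis .
qed

lemma ket_psd: "x < d \<Longrightarrow> psd d (ket_proj x)"
  unfolding psd_def
proof (intro allI conjI)
  fix v :: "nat \<Rightarrow> complex" assume x: "x < d"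
  have e: "cnj (v x) * v x = of_real ((norm (v x))\<^sup>2)"
    by (subst complex_norm_square) (rule mult.commute)
  show "(\<Sum>i<d. \<Sum>j<d. cnj (v i) * ket_proj x i j * v j) \<in> \<real>"
    using x by (simp only: ket_sum e) simp
  show "0 \<le> Re (\<Sum>i<d. \<Sum>j<d. cnj (v i) * ket_proj x i j * v j)"
    using x by (simp only: ket_sum e) simp
qed

lemma chan_diag:
  assumes ch: "is_channel n \<Phi>" and x: "x < 2^n" and y: "y < 2^n"
  shows "0 \<le> f_ch \<Phi> (x, y) \<and> f_ch \<Phi> (x, y) \<le> 1"
proof -
  define N :: nat where "N = 2^n"
  have cp: "\<And>k X. psd (k * N) X \<Longrightarrow> psd (k * N) (id_tensor N k \<Phi> X)"
    and tp: "\<And>X. (\<Sum>i<N. \<Phi> X i i) = (\<Sum>i<N. X i i)"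
    using ch unfolding is_channel_def N_def Let_def by blast+
  define K where "K = ket_proj x"
  have "psd (1 * N) K" using x ket_psd unfolding K_def N_def by simp
  then have P: "psd (1 * N) (id_tensor N 1 \<Phi> K)" by (rule cp)
  have P': "psd N (id_tensor N 1 \<Phi> K)" using P by simp
  have diag: "\<Phi> K i i \<in> \<real> \<and> 0 \<le> Re (\<Phi> K i i)" if i: "i < N" for i
  proof -
    have e1: "id_tensor N 1 \<Phi> K i i = \<Phi> K i i"
      using i unfolding id_tensor_def by simp
    have e2: "(\<Sum>a<N. \<Sum>b<N. cnj (if a = i then 1 else 0) * id_tensor N 1 \<Phi> K a b * (if b = i then 1 else 0)) = id_tensor N 1 \<Phi> K i i"
      using i by (rule sel_sum)
    have "\<forall>v::nat\<Rightarrow>complex. (\<Sum>a<N. \<Sum>b<N. cnj (v a) * id_tensor N 1 \<Phi> K a b * v b) \<in> \<real> \<and>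
        0 \<le> Re (\<Sum>a<N. \<Sum>b<N. cnj (v a) * id_tensor N 1 \<Phi> K a b * v b)"
      using P' unfolding psd_def .
    then have "(\<Sum>a<N. \<Sum>b<N. cnj (if a = i then 1 else 0) * id_tensor N 1 \<Phi> K a b * (if b = i then 1 else 0)) \<in> \<real> \<and>
        0 \<le> Re (\<Sum>a<N. \<Sum>b<N. cnj (if a = i then 1 else 0) * id_tensor N 1 \<Phi> K a b * (if b = i then 1 else 0))"
      by (rule spec[where x="\<lambda>a. if a = i then 1 else 0"])
    then show ?thesis by (simp only: e2 e1)
  qed
  have tr: "(\<Sum>i<N. \<Phi> K i i) = 1"
    using tp[of K] x unfolding K_def N_def ket_proj_def by simp
  have yN: "y < N" using y by (simp add: N_def)
  have "Re (\<Phi> K y y) \<le> (\<Sum>i<N. Re (\<Phi> K i i))"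
    using yN diag by (intro member_le_sum) auto
  also have "\<dots> = 1" using arg_cong[OF tr, of Re] by simp
  finally show ?thesis using diag[OF yN] unfolding f_ch_def K_def by simp
qed

lemma conv_rep:
  assumes "\<Phi>c \<in> conv_ch n Ocal"
  obtains k :: nat and p :: "nat \<Rightarrow> real" and \<Phi>s :: "nat \<Rightarrow> superop" where "\<forall>l<k. \<Phi>s l \<in> Ocal \<and> 0 \<le> p l" "(\<Sum>l<k. p l) = 1"
    "\<And>x y. y < 2^n \<Longrightarrow> f_ch \<Phi>c (x, y) = (\<Sum>l<k. p l * f_ch (\<Phi>s l) (x, y))"
proof -
  have "\<exists>(k::nat) (p::nat \<Rightarrow> real) \<Phi>s.
      (\<forall>l<k. \<Phi>s l \<in> Ocal \<and> 0 \<le> p l) \<and> (\<Sum>l<k. p l) = 1 \<and>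
      (\<forall>X. \<forall>i<2^n. \<forall>j<2^n. \<Phi>c X i j = (\<Sum>l<k. complex_of_real (p l) * \<Phi>s l X i j))"
    using assms unfolding conv_ch_def mem_Collect_eq .
  then obtain k where "\<exists>(p::nat \<Rightarrow> real) \<Phi>s.
      (\<forall>l<k. \<Phi>s l \<in> Ocal \<and> 0 \<le> p l) \<and> (\<Sum>l<k. p l) = 1 \<and>
      (\<forall>X. \<forall>i<2^n. \<forall>j<2^n. \<Phi>c X i j = (\<Sum>l<k. complex_of_real (p l) * \<Phi>s l X i j))"
    by (rule exE)
  then obtain p :: "nat \<Rightarrow> real" where "\<exists>\<Phi>s.
      (\<forall>l<k. \<Phi>s l \<in> Ocal \<and> 0 \<le> p l) \<and> (\<Sum>l<k. p l) = 1 \<and>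
      (\<forall>X. \<forall>i<2^n. \<forall>j<2^n. \<Phi>c X i j = (\<Sum>l<k. complex_of_real (p l) * \<Phi>s l X i j))"
    by (rule exE)
  then obtain \<Phi>s where HH: "(\<forall>l<k. \<Phi>s l \<in> Ocal \<and> 0 \<le> p l) \<and> (\<Sum>l<k. p l) = 1 \<and>
      (\<forall>X. \<forall>i<2^n. \<forall>j<2^n. \<Phi>c X i j = (\<Sum>l<k. complex_of_real (p l) * \<Phi>s l X i j))"
    by (rule exE)
  note H = HH[THEN conjunct1] HH[THEN conjunct2, THEN conjunct1] HH[THEN conjunct2, THEN conjunct2]
  show ?thesis
  proof (rule that)
    show "\<forall>l<k. \<Phi>s l \<in> Ocal \<and> 0 \<le> p l" by (rule H(1))
    show "(\<Sum>l<k. p l) = 1" by (rule H(2))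
    fix x y :: nat assume "y < 2^n"
    then show "f_ch \<Phi>c (x, y) = (\<Sum>l<k. p l * f_ch (\<Phi>s l) (x, y))"
      using H(3) unfolding f_ch_def by simp
  qed
qed

lemma tm_conv_le:
  assumes "\<Phi>c \<in> conv_ch n Ocal" and zr: "\<forall>i<m. snd (z i) < 2^n"
    and bdd: "bdd_above ((\<lambda>h. tm m z h g) ` F_cls Ocal)"
  shows "tm m z (f_ch \<Phi>c) g \<le> (SUP h\<in>F_cls Ocal. tm m z h g)"
proof -
  obtain k :: nat and \<Phi>s :: "nat \<Rightarrow> superop" and p :: "nat \<Rightarrow> real" where H: "\<forall>l<k. \<Phi>s l \<in> Ocal \<and> 0 \<le> p l" "(\<Sum>l<k. p l) = 1"
    "\<And>x y. y < 2^n \<Longrightarrow> f_ch \<Phi>c (x, y) = (\<Sum>l<k. p l * f_ch (\<Phi>s l) (x, y))"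
  proof (rule conv_rep[OF assms(1)])
    fix k :: nat and p :: "nat \<Rightarrow> real" and \<Phi>s :: "nat \<Rightarrow> superop"
    assume a: "\<forall>l<k. \<Phi>s l \<in> Ocal \<and> 0 \<le> p l" "(\<Sum>l<k. p l) = 1"
      "\<And>x y. y < 2^n \<Longrightarrow> f_ch \<Phi>c (x, y) = (\<Sum>l<k. p l * f_ch (\<Phi>s l) (x, y))"
    show thesis by (rule that[OF a])
  qed
  have fz: "f_ch \<Phi>c (z i) = (\<Sum>l<k. p l * f_ch (\<Phi>s l) (z i))" if "i < m" for i
    using H(3)[where x="fst (z i)" and y="snd (z i)"] zr that by simp
  have "tm m z (f_ch \<Phi>c) g = (1 / real m) * (\<Sum>i<m. g i * (\<Sum>l<k. p l * f_ch (\<Phi>s l) (z i)))"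
    unfolding tm_def using fz by (intro arg_cong[where f="\<lambda>t. (1 / real m) * t"] sum.cong) auto
  also have "\<dots> = (\<Sum>l<k. p l * tm m z (f_ch (\<Phi>s l)) g)"
    unfolding tm_def sum_distrib_left
    by (subst sum.swap) (intro sum.cong refl, simp add: mult_ac)
  also have "\<dots> \<le> (\<Sum>l<k. p l * (SUP h\<in>F_cls Ocal. tm m z h g))"
  proof (rule sum_mono)
    fix l assume l: "l \<in> {..<k}"
    have "tm m z (f_ch (\<Phi>s l)) g \<le> (SUP h\<in>F_cls Ocal. tm m z h g)"
      using H(1) l bdd by (intro cSUP_upper) (auto simp: F_cls_def)
    then show "p l * tm m z (f_ch (\<Phi>s l)) g \<le> p l * (SUP h\<in>F_cls Ocal. tm m z h g)"
      using H(1) l by (intro mult_left_mono) auto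
  qed
  also have "\<dots> = (SUP h\<in>F_cls Ocal. tm m z h g)"
    using H(2) by (simp only: sum_distrib_right[symmetric] mult_1)
  finally show ?thesis .
qed



lemma emp_gauss_tm: "emp_gauss m z G = integral\<^sup>L (gauss_m m) (\<lambda>g. SUP h\<in>G. tm m z h g)"
  by (simp add: emp_gauss_def tm_def)

lemma F_ins: "F_cls (Ocal \<union> {\<Psi>}) = insert (f_ch \<Psi>) (F_cls Ocal)"
  by (auto simp: F_cls_def)

lemma bnd_F:
  assumes "\<forall>\<Phi>\<in>Ocal. is_channel n \<Phi>" "\<forall>i<m. fst (z i) < 2^n \<and> snd (z i) < 2^n"
  shows "\<forall>h\<in>F_cls Ocal. \<forall>i<m. 0 \<le> h (z i) \<and> h (z i) \<le> 1"
proof (intro ballI allI impI)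
  fix h i assume h: "h \<in> F_cls Ocal" and i: "i < m"
  then obtain \<Phi> where "\<Phi> \<in> Ocal" "h = f_ch \<Phi>" by (auto simp: F_cls_def)
  then show "0 \<le> h (z i) \<and> h (z i) \<le> 1"
    using chan_diag[of n \<Phi> "fst (z i)" "snd (z i)"] assms i by simp
qed

lemma per_lam:
  assumes O: "Ocal \<noteq> {}" and ch: "\<forall>\<Phi>\<in>Ocal. is_channel n \<Phi>" and chP: "is_channel n \<Psi>"
    and zr: "\<forall>i<m. fst (z i) < 2^n \<and> snd (z i) < 2^n"
    and lam: "0 \<le> lam" and P2: "\<Phi>2 \<in> conv_ch n Ocal"
    and P1: "(\<lambda>X i j. (\<Psi> X i j + complex_of_real lam * \<Phi>2 X i j) / (1 + complex_of_real lam)) \<in> conv_ch n Ocal"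
  shows "emp_gauss m z (F_cls (Ocal \<union> {\<Psi>})) \<le> (1 + lam) * emp_gauss m z (F_cls Ocal)"
proof -
  define \<Phi>1 where "\<Phi>1 = (\<lambda>X i j. (\<Psi> X i j + complex_of_real lam * \<Phi>2 X i j) / (1 + complex_of_real lam))"
  have P1': "\<Phi>1 \<in> conv_ch n Ocal" using P1 by (simp add: \<Phi>1_def)
  define G0 where "G0 = F_cls Ocal"
  have G0: "G0 \<noteq> {}" using O by (simp add: G0_def F_cls_def)
  have b0: "\<forall>h\<in>G0. \<forall>i<m. 0 \<le> h (z i) \<and> h (z i) \<le> 1" unfolding G0_def using bnd_F[OF ch zr] .
  have bP: "\<forall>i<m. 0 \<le> f_ch \<Psi> (z i) \<and> f_ch \<Psi> (z i) \<le> 1"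
  proof (intro allI impI)
    fix i assume i: "i < m"
    show "0 \<le> f_ch \<Psi> (z i) \<and> f_ch \<Psi> (z i) \<le> 1"
      using chan_diag[OF chP, of "fst (z i)" "snd (z i)"] zr i by simp
  qed
  have b1: "\<forall>h\<in>insert (f_ch \<Psi>) G0. \<forall>i<m. 0 \<le> h (z i) \<and> h (z i) \<le> 1" using b0 bP by auto
  define S0 where "S0 = (\<lambda>g. SUP h\<in>G0. tm m z h g)"
  define S1 where "S1 = (\<lambda>g. SUP h\<in>insert (f_ch \<Psi>) G0. tm m z h g)"
  have zr2: "\<forall>i<m. snd (z i) < 2^n" using zr by auto
  have le0: "tm m z (f_ch \<Phi>c) g \<le> S0 g" if "\<Phi>c \<in> conv_ch n Ocal" for \<Phi>c g
    unfolding S0_def G0_def using that zr2 bdd_tm[OF b0[unfolded G0_def]] by (rule tm_conv_le)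
  have fP: "f_ch \<Psi> w = (1 + lam) * f_ch \<Phi>1 w - lam * f_ch \<Phi>2 w" for w
  proof -
    define a where "a = \<Psi> (ket_proj (fst w)) (snd w) (snd w)"
    define b where "b = \<Phi>2 (ket_proj (fst w)) (snd w) (snd w)"
    have "f_ch \<Phi>1 w = Re ((a + complex_of_real lam * b) / complex_of_real (1 + lam))"
      unfolding f_ch_def \<Phi>1_def a_def b_def by simp
    also have "\<dots> = Re (a + complex_of_real lam * b) / (1 + lam)"
      by (rule Re_divide_of_real)
    also have "\<dots> = (Re a + lam * Re b) / (1 + lam)" by simp
    finally have "f_ch \<Phi>1 w = (Re a + lam * Re b) / (1 + lam)" .
    moreover have "f_ch \<Psi> w = Re a" "f_ch \<Phi>2 w = Re b" unfolding f_ch_def a_def b_def by simp_all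
    ultimately show ?thesis using lam by (simp add: field_simps)
  qed
  have tP: "tm m z (f_ch \<Psi>) g = (1 + lam) * tm m z (f_ch \<Phi>1) g - lam * tm m z (f_ch \<Phi>2) g" for g
  proof -
    have "(\<Sum>i<m. g i * ((1 + lam) * f_ch \<Phi>1 (z i) - lam * f_ch \<Phi>2 (z i)))
        = (1 + lam) * (\<Sum>i<m. g i * f_ch \<Phi>1 (z i)) - lam * (\<Sum>i<m. g i * f_ch \<Phi>2 (z i))"
      by (simp add: sum_distrib_left sum_subtractf algebra_simps)
    then have "tm m z (f_ch \<Psi>) g = (1 / real m) * ((1 + lam) * (\<Sum>i<m. g i * f_ch \<Phi>1 (z i)) - lam * (\<Sum>i<m. g i * f_ch \<Phi>2 (z i)))"
      unfolding tm_def fP by (simp only:)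
    also have "\<dots> = (1 + lam) * tm m z (f_ch \<Phi>1) g - lam * tm m z (f_ch \<Phi>2) g"
      unfolding tm_def by (simp add: algebra_simps add_divide_distrib diff_divide_distrib)
    finally show ?thesis .
  qed
  have S1le: "S1 g \<le> (1 + lam) * S0 g - lam * tm m z (f_ch \<Phi>2) g" for g
  proof -
    have a1: "tm m z (f_ch \<Phi>1) g \<le> S0 g" using le0 P1' by auto
    have a2: "tm m z (f_ch \<Phi>2) g \<le> S0 g" using le0 P2 by auto
    have dist: "(1 + lam) * S0 g = S0 g + lam * S0 g" by (simp add: distrib_right)
    have m2: "lam * tm m z (f_ch \<Phi>2) g \<le> lam * S0 g" by (rule mult_left_mono[OF a2 lam])
    have m1: "(1 + lam) * tm m z (f_ch \<Phi>1) g \<le> (1 + lam) * S0 g"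
      by (rule mult_left_mono[OF a1]) (use lam in simp)
    show ?thesis unfolding S1_def
    proof (rule cSUP_least)
      show "insert (f_ch \<Psi>) G0 \<noteq> {}" by simp
      fix h assume "h \<in> insert (f_ch \<Psi>) G0"
      then consider "h = f_ch \<Psi>" | "h \<in> G0" by auto
      then show "tm m z h g \<le> (1 + lam) * S0 g - lam * tm m z (f_ch \<Phi>2) g"
      proof cases
        case 1
        then show ?thesis using tP[of g] m1 by simp
      next
        case 2
        have "tm m z h g \<le> S0 g" unfolding S0_def using 2 bdd_tm[OF b0] by (rule cSUP_upper)
        then show ?thesis using dist m2 by linarith
      qed
    qed
  qed
  have int0: "integrable (gauss_m m) S0" unfolding S0_def by (rule sup_int[OF G0 b0])
  have int1: "integrable (gauss_m m) S1" unfolding S1_def by (rule sup_int[OF _ b1]) simp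
  have intR: "integrable (gauss_m m) (\<lambda>g. (1 + lam) * S0 g - lam * tm m z (f_ch \<Phi>2) g)"
    by (rule Bochner_Integration.integrable_diff[OF integrable_mult_right[OF int0] integrable_mult_right[OF tm_int(1)]])
  have "emp_gauss m z (F_cls (Ocal \<union> {\<Psi>})) = integral\<^sup>L (gauss_m m) S1"
    unfolding emp_gauss_tm F_ins S1_def G0_def ..
  also have "\<dots> \<le> integral\<^sup>L (gauss_m m) (\<lambda>g. (1 + lam) * S0 g - lam * tm m z (f_ch \<Phi>2) g)"
    by (rule integral_mono[OF int1 intR S1le])
  also have "\<dots> = (1 + lam) * integral\<^sup>L (gauss_m m) S0 - lam * integral\<^sup>L (gauss_m m) (\<lambda>g. tm m z (f_ch \<Phi>2) g)"
    by (subst Bochner_Integration.integral_diff[OF integrable_mult_right[OF int0] integrable_mult_right[OF tm_int(1)]]) simp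
  also have "\<dots> = (1 + lam) * emp_gauss m z (F_cls Ocal)"
    by (simp add: tm_int(2) emp_gauss_tm S0_def G0_def)
  finally show ?thesis .
qed

lemma per_mono:
  assumes O: "Ocal \<noteq> {}" and ch: "\<forall>\<Phi>\<in>Ocal. is_channel n \<Phi>" and chP: "is_channel n \<Psi>"
    and zr: "\<forall>i<m. fst (z i) < 2^n \<and> snd (z i) < 2^n"
  shows "0 \<le> emp_gauss m z (F_cls Ocal)"
    "emp_gauss m z (F_cls Ocal) \<le> emp_gauss m z (F_cls (Ocal \<union> {\<Psi>}))"
proof -
  define G0 where "G0 = F_cls Ocal"
  have G0: "G0 \<noteq> {}" using O by (simp add: G0_def F_cls_def)
  have b0: "\<forall>h\<in>G0. \<forall>i<m. 0 \<le> h (z i) \<and> h (z i) \<le> 1" unfolding G0_def using bnd_F[OF ch zr] .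
  have bP: "\<forall>i<m. 0 \<le> f_ch \<Psi> (z i) \<and> f_ch \<Psi> (z i) \<le> 1"
  proof (intro allI impI)
    fix i assume i: "i < m"
    show "0 \<le> f_ch \<Psi> (z i) \<and> f_ch \<Psi> (z i) \<le> 1"
      using chan_diag[OF chP, of "fst (z i)" "snd (z i)"] zr i by simp
  qed
  have b1: "\<forall>h\<in>insert (f_ch \<Psi>) G0. \<forall>i<m. 0 \<le> h (z i) \<and> h (z i) \<le> 1" using b0 bP by auto
  obtain h0 where h0: "h0 \<in> G0" using G0 by blast
  have "0 = integral\<^sup>L (gauss_m m) (\<lambda>g. tm m z h0 g)" by (simp add: tm_int(2))
  also have "\<dots> \<le> integral\<^sup>L (gauss_m m) (\<lambda>g. SUP h\<in>G0. tm m z h g)"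
    by (rule integral_mono[OF tm_int(1) sup_int[OF G0 b0]]) (rule cSUP_upper[OF h0 bdd_tm[OF b0]])
  finally show "0 \<le> emp_gauss m z (F_cls Ocal)" by (simp add: emp_gauss_tm G0_def)
  have "integral\<^sup>L (gauss_m m) (\<lambda>g. SUP h\<in>G0. tm m z h g) \<le> integral\<^sup>L (gauss_m m) (\<lambda>g. SUP h\<in>insert (f_ch \<Psi>) G0. tm m z h g)"
    by (rule integral_mono[OF sup_int[OF G0 b0] sup_int[OF insert_not_empty b1]])
       (rule cSUP_subset_mono[OF G0 bdd_tm[OF b1]]; auto)
  then show "emp_gauss m z (F_cls Ocal) \<le> emp_gauss m z (F_cls (Ocal \<union> {\<Psi>}))"
    unfolding emp_gauss_tm G0_def F_ins .
qed

lemma gamma_step: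
  fixes A B :: real and \<Lambda> :: "real set"
  assumes fin: "Inf (ereal ` \<Lambda>) < \<infinity>" and H: "\<forall>l\<in>\<Lambda>. 0 \<le> l \<and> B \<le> (1 + l) * A"
    and A: "0 \<le> A"
  shows "B \<le> (1 + real_of_ereal (Inf (ereal ` \<Lambda>))) * A"
proof -
  have ne: "\<Lambda> \<noteq> {}" using fin by (auto simp: top_ereal_def)
  have g0: "0 \<le> Inf (ereal ` \<Lambda>)" by (rule Inf_greatest) (use H in auto)
  obtain r where r: "Inf (ereal ` \<Lambda>) = ereal r" using g0 fin by (cases "Inf (ereal ` \<Lambda>)") auto
  show ?thesis
  proof (cases "A = 0")
    case True
    obtain l where "l \<in> \<Lambda>" using ne by blast
    then have "B \<le> 0" using H True by auto
    then show ?thesis using True by simp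
  next
    case False
    then have Ap: "A > 0" using A by simp
    have "ereal ((B - A) / A) \<le> Inf (ereal ` \<Lambda>)"
    proof (rule Inf_greatest)
      fix x assume "x \<in> ereal ` \<Lambda>"
      then obtain l where l: "l \<in> \<Lambda>" "x = ereal l" by blast
      have "B - A \<le> l * A" using H l(1) by (auto simp: algebra_simps)
      then have "(B - A) / A \<le> l" using Ap by (simp add: pos_divide_le_eq)
      then show "ereal ((B - A) / A) \<le> x" using l(2) by simp
    qed
    then have "(B - A) / A \<le> r" using r by simp
    then have "B - A \<le> r * A" using Ap by (simp add: pos_divide_le_eq)
    then show ?thesis using r by (simp add: algebra_simps)
  qed
qed

lemma per_z:
  assumes O: "Ocal \<noteq> {}" and ch: "\<forall>\<Phi>\<in>Ocal. is_channel n \<Phi>" and chP: "is_channel n \<Psi>"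
    and fin: "free_robustness n Ocal \<Psi> < \<infinity>"
    and zr: "\<forall>i<m. fst (z i) < 2^n \<and> snd (z i) < 2^n"
  shows "emp_gauss m z (F_cls Ocal) \<le> emp_gauss m z (F_cls (Ocal \<union> {\<Psi>})) \<and>
         emp_gauss m z (F_cls (Ocal \<union> {\<Psi>}))
           \<le> (1 + real_of_ereal (free_robustness n Ocal \<Psi>)) * emp_gauss m z (F_cls Ocal)"
proof
  show "emp_gauss m z (F_cls Ocal) \<le> emp_gauss m z (F_cls (Ocal \<union> {\<Psi>}))"
    by (rule per_mono(2)[OF O ch chP zr])
  show "emp_gauss m z (F_cls (Ocal \<union> {\<Psi>}))
           \<le> (1 + real_of_ereal (free_robustness n Ocal \<Psi>)) * emp_gauss m z (F_cls Ocal)"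
    using fin unfolding free_robustness_def
  proof (rule gamma_step)
    show "0 \<le> emp_gauss m z (F_cls Ocal)" by (rule per_mono(1)[OF O ch chP zr])
    show "\<forall>l\<in>{lam. 0 \<le> lam \<and> (\<exists>\<Phi>\<in>conv_ch n Ocal.
       (\<lambda>X i j. (\<Psi> X i j + complex_of_real lam * \<Phi> X i j) / (1 + complex_of_real lam)) \<in> conv_ch n Ocal)}.
       0 \<le> l \<and> emp_gauss m z (F_cls (Ocal \<union> {\<Psi>})) \<le> (1 + l) * emp_gauss m z (F_cls Ocal)"
      using per_lam[OF O ch chP zr] by blast
  qed
qed



lemma pmf_prod_meas:
  fixes D :: "'a::countable pmf" and f :: "(nat \<Rightarrow> 'a) \<Rightarrow> real"
  shows "f \<in> borel_measurable (PiM {..<m} (\<lambda>_. measure_pmf D))"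
proof (rule measurableI)
  let ?P = "PiM {..<m} (\<lambda>_. measure_pmf D)"
  fix S :: "real set"
  have sub: "f -` S \<inter> space ?P \<subseteq> PiE {..<m} (\<lambda>_. UNIV)" by (auto simp: space_PiM)
  have "countable (PiE {..<m} (\<lambda>_. UNIV :: 'a set))"
    by (rule countable_PiE) auto
  then have c: "countable (f -` S \<inter> space ?P)" using sub countable_subset by blast
  show "f -` S \<inter> space ?P \<in> sets ?P"
  proof (rule sets.countable[OF _ c])
    fix a assume a: "a \<in> f -` S \<inter> space ?P"
    then have ext: "a \<in> PiE {..<m} (\<lambda>_. UNIV)" by (auto simp: space_PiM)
    have "{a} = PiE {..<m} (\<lambda>i. {a i})"
      using ext by (intro PiE_singleton[symmetric]) (simp add: PiE_iff)
    also have "\<dots> \<in> sets ?P" by (rule sets_PiM_I_finite) auto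
    finally show "{a} \<in> sets ?P" .
  qed
qed simp

lemma exp_part:
  fixes A B :: "(nat \<Rightarrow> nat \<times> nat) \<Rightarrow> real" and D :: "(nat \<times> nat) pmf"
  assumes per: "\<And>z. \<forall>i<m. fst (z i) < 2^n \<and> snd (z i) < 2^n \<Longrightarrow> A z \<le> B z \<and> B z \<le> c * A z"
    and D: "set_pmf D \<subseteq> {..<2^n} \<times> {..<2^n}"
  shows "integral\<^sup>L (PiM {..<m} (\<lambda>_. measure_pmf D)) A \<le> integral\<^sup>L (PiM {..<m} (\<lambda>_. measure_pmf D)) B \<and>
         integral\<^sup>L (PiM {..<m} (\<lambda>_. measure_pmf D)) B \<le> c * integral\<^sup>L (PiM {..<m} (\<lambda>_. measure_pmf D)) A"
proof -
  define P where "P = PiM {..<m} (\<lambda>_. measure_pmf D)"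
  interpret P: prob_space P unfolding P_def
    by (rule prob_space_PiM) (rule measure_pmf.prob_space_axioms)
  have comp: "AE z in P. z i \<in> set_pmf D" if i: "i < m" for i
  proof -
    have d: "distr P (measure_pmf D) (\<lambda>z. z i) = measure_pmf D"
      unfolding P_def using i by (intro distr_PiM_component) (auto intro: measure_pmf.prob_space_axioms)
    have meas: "(\<lambda>z. z i) \<in> measurable P (measure_pmf D)"
      unfolding P_def using i by (intro measurable_component_singleton) auto
    have "AE x in distr P (measure_pmf D) (\<lambda>z. z i). x \<in> set_pmf D"
      unfolding d by (rule AE_measure_pmf)
    then show ?thesis by (subst (asm) AE_distr_iff[OF meas]) auto
  qed
  have AEz: "AE z in P. z \<in> PiE {..<m} (\<lambda>_. set_pmf D)"
  proof -
    have "AE z in P. \<forall>i\<in>{..<m}. z i \<in> set_pmf D"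
      by (rule AE_finite_allI) (use comp in auto)
    then show ?thesis using AE_space[of P]
      by eventually_elim (auto simp: P_def space_PiM PiE_iff)
  qed
  define Z0 where "Z0 = PiE {..<m} (\<lambda>_. set_pmf D)"
  have finD: "finite (set_pmf D)" using D by (rule finite_subset) auto
  have finZ: "finite Z0" unfolding Z0_def using finD by (intro finite_PiE) auto
  have inr: "\<forall>i<m. fst (z i) < 2^n \<and> snd (z i) < 2^n" if "z \<in> Z0" for z
    using that D by (auto simp: Z0_def PiE_iff)
  have intf: "integrable P f" for f :: "(nat \<Rightarrow> nat \<times> nat) \<Rightarrow> real"
  proof (rule P.integrable_const_bound[where B="\<Sum>w\<in>Z0. \<bar>f w\<bar>"])
    show "AE z in P. norm (f z) \<le> (\<Sum>w\<in>Z0. \<bar>f w\<bar>)"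
      using AEz
    proof eventually_elim
      case (elim z)
      then have "z \<in> Z0" by (simp add: Z0_def)
      then show ?case using finZ by (auto intro: member_le_sum)
    qed
    show "f \<in> borel_measurable P" unfolding P_def by (rule pmf_prod_meas)
  qed
  have "integral\<^sup>L P A \<le> integral\<^sup>L P B"
    by (rule integral_mono_AE[OF intf intf]) (use AEz in \<open>eventually_elim, use per inr in \<open>auto simp: Z0_def\<close>\<close>)
  moreover have "integral\<^sup>L P B \<le> integral\<^sup>L P (\<lambda>z. c * A z)"
    by (rule integral_mono_AE[OF intf intf]) (use AEz in \<open>eventually_elim, use per inr in \<open>auto simp: Z0_def\<close>\<close>)
  ultimately show ?thesis by (simp add: P_def)
qed


theorem mainTheorem10:
  fixes n :: nat and Ocal :: "superop set" and \<Psi> :: superop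
  assumes "Ocal \<noteq> {}"
    and "\<forall>\<Phi>\<in>Ocal. is_channel n \<Phi>"
    and "is_channel n \<Psi>"
    and "free_robustness n Ocal \<Psi> < \<infinity>"
  shows "(\<forall>(m::nat) (z :: nat \<Rightarrow> nat \<times> nat).
            (\<forall>i<m. fst (z i) < 2^n \<and> snd (z i) < 2^n) \<longrightarrow>
            emp_gauss m z (F_cls Ocal) \<le> emp_gauss m z (F_cls (Ocal \<union> {\<Psi>})) \<and>
            emp_gauss m z (F_cls (Ocal \<union> {\<Psi>}))
              \<le> (1 + real_of_ereal (free_robustness n Ocal \<Psi>)) * emp_gauss m z (F_cls Ocal))
       \<and> (\<forall>(m::nat) (D :: (nat \<times> nat) pmf).
            set_pmf D \<subseteq> {..<2^n} \<times> {..<2^n} \<longrightarrow>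
            exp_gauss m D (F_cls Ocal) \<le> exp_gauss m D (F_cls (Ocal \<union> {\<Psi>})) \<and>
            exp_gauss m D (F_cls (Ocal \<union> {\<Psi>}))
              \<le> (1 + real_of_ereal (free_robustness n Ocal \<Psi>)) * exp_gauss m D (F_cls Ocal))"
  proof -
  have Z: "\<And>m z. \<forall>i<m. fst (z i) < 2^n \<and> snd (z i) < 2^n \<Longrightarrow>
            emp_gauss m z (F_cls Ocal) \<le> emp_gauss m z (F_cls (Ocal \<union> {\<Psi>})) \<and>
            emp_gauss m z (F_cls (Ocal \<union> {\<Psi>}))
              \<le> (1 + real_of_ereal (free_robustness n Ocal \<Psi>)) * emp_gauss m z (F_cls Ocal)"
    by (rule per_z[OF assms])
  have E: "\<And>m (D :: (nat \<times> nat) pmf). set_pmf D \<subseteq> {..<2^n} \<times> {..<2^n} \<Longrightarrow>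
            exp_gauss m D (F_cls Ocal) \<le> exp_gauss m D (F_cls (Ocal \<union> {\<Psi>})) \<and>
            exp_gauss m D (F_cls (Ocal \<union> {\<Psi>}))
              \<le> (1 + real_of_ereal (free_robustness n Ocal \<Psi>)) * exp_gauss m D (F_cls Ocal)"
    unfolding exp_gauss_def by (rule exp_part[OF Z])
  show ?thesis using Z E by blast
qed

end
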